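(* Let $H$ be a dephased $d\times d$ complex Hadamard matrix such that one of the following holds: (1) the diagonal entries of $H$ are real and all other entries are non-real; (2) every entry of $H$ is of the form $\omega^k$ with $k\in\{0,\dots,d/2-1\}$, where $\omega=e^{2\pi i/d}$; (3) every entry of $H$ is a power of $\omega=e^{2\pi i/N}$ for some odd $N$. Then $H$ has no ER pair of columns and no ER pair of rows (so the construction producing families from ER pairs cannot be applied to $H$).
   Context: A $d\times d$ complex Hadamard matrix has unimodular entries and pairwise orthogonal columns; it is dephased if its first row and first column consist of $1$'s. Two distinct columns $C_A,C_B$ form an ER pair if $\overline{(C_A)_j}(C_B)_j\in\{1,-1\}$ for every $j$; ER pairs of rows are defined analogously. *)

theory Defs
  imports Complex_Main
begin

text \<open>A d x d complex matrix is represented as H :: nat => nat => complex,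
  H i j being the entry in row i, column j, with indices 0..d-1.\<close>

definition complex_hadamard :: "nat \<Rightarrow> (nat \<Rightarrow> nat \<Rightarrow> complex) \<Rightarrow> bool" where
  "complex_hadamard d H \<longleftrightarrow>
     (\<forall>i<d. \<forall>j<d. cmod (H i j) = 1) \<and>
     (\<forall>a<d. \<forall>b<d. a \<noteq> b \<longrightarrow> (\<Sum>j<d. cnj (H j a) * H j b) = 0)"

definition dephased :: "nat \<Rightarrow> (nat \<Rightarrow> nat \<Rightarrow> complex) \<Rightarrow> bool" where
  "dephased d H \<longleftrightarrow> (\<forall>j<d. H 0 j = 1 \<and> H j 0 = 1)"

definition ER_column_pair :: "nat \<Rightarrow> (nat \<Rightarrow> nat \<Rightarrow> complex) \<Rightarrow> nat \<Rightarrow> nat \<Rightarrow> bool" where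
  "ER_column_pair d H a b \<longleftrightarrow> a < d \<and> b < d \<and> a \<noteq> b \<and>
     (\<forall>j<d. cnj (H j a) * H j b \<in> {1, -1})"

definition ER_row_pair :: "nat \<Rightarrow> (nat \<Rightarrow> nat \<Rightarrow> complex) \<Rightarrow> nat \<Rightarrow> nat \<Rightarrow> bool" where
  "ER_row_pair d H a b \<longleftrightarrow> a < d \<and> b < d \<and> a \<noteq> b \<and>
     (\<forall>j<d. cnj (H a j) * H b j \<in> {1, -1})"

end

theory Submission imports Defs "Jordan_Normal_Form.Determinant" begin

lemma rows_orth:
  assumes h: "complex_hadamard d H" and ab: "a < d" "b < d" "a \<noteq> b"
  shows "(\<Sum>k<d. H a k * cnj (H b k)) = 0"
proof -
  have d0: "d > 0" using ab by auto
  define A where "A = mat d d (\<lambda>(i,j). cnj (H j i) / of_nat d)"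
  define B where "B = mat d d (\<lambda>(i,j). H i j)"
  have AB: "A * B = 1\<^sub>m d"
  proof (rule eq_matI)
    fix i j assume ij: "i < dim_row (1\<^sub>m d)" "j < dim_col (1\<^sub>m d)"
    hence i: "i < d" and j: "j < d" by auto
    have "(A * B) $$ (i, j) = (\<Sum>k\<in>{0..<d}. cnj (H k i) / of_nat d * H k j)"
      using i j by (simp add: A_def B_def scalar_prod_def)
    also have "\<dots> = (\<Sum>k<d. cnj (H k i) * H k j) / of_nat d"
      by (simp add: sum_divide_distrib atLeast0LessThan)
    also have "\<dots> = (if i = j then 1 else 0)"
    proof (cases "i = j")
      case True
      have "(\<Sum>k<d. cnj (H k i) * H k j) = (\<Sum>k<d. 1)"
      proof (rule sum.cong)
        fix k assume "k \<in> {..<d}"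
        hence "cmod (H k i) = 1" using h i unfolding complex_hadamard_def by auto
        thus "cnj (H k i) * H k j = 1" using True
          by (metis complex_norm_square mult.commute of_real_1 power_one)
      qed simp
      thus ?thesis using True d0 by simp
    next
      case False
      thus ?thesis using h i j unfolding complex_hadamard_def by auto
    qed
    finally show "(A * B) $$ (i, j) = 1\<^sub>m d $$ (i, j)" using i j by simp
  qed (auto simp: A_def B_def)
  have BA: "B * A = 1\<^sub>m d"
    by (rule mat_mult_left_right_inverse[OF _ _ AB]) (auto simp: A_def B_def)
  have "(B * A) $$ (a, b) = 0" using BA ab by simp
  moreover have "(B * A) $$ (a, b) = (\<Sum>k<d. H a k * cnj (H b k)) / of_nat d"
    using ab by (simp add: A_def B_def scalar_prod_def sum_divide_distrib atLeast0LessThan)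
  ultimately show ?thesis using d0 by simp
qed

lemma cis_neg1_small:
  assumes "2 * j < d" and "cis (2 * pi / real d) ^ j = -1"
  shows False
proof -
  define t where "t = real j * (2 * pi / real d)"
  have c: "cis t = -1" using assms(2) by (simp add: DeMoivre t_def)
  hence cs: "cos t = -1" "sin t = 0" using complex.expand by (auto simp: cis.ctr complex_eq_iff)
  have d0: "d > 0" using assms by auto
  have "t < pi"
  proof -
    have "real (2*j) < real d" using assms(1) by linarith
    hence "t * real d = pi * real (2*j)" unfolding t_def using d0 by (simp add: field_simps)
    also have "\<dots> < pi * real d" using \<open>real (2*j) < real d\<close> by simp
    finally show ?thesis using d0 by simp
  qed
  moreover have "t \<ge> 0" unfolding t_def using d0 by simp
  ultimately show False using cs
  proof (cases "t = 0")
    case True thus False using cs by simp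
  next
    case False
    hence "sin t > 0" using \<open>t \<ge> 0\<close> \<open>t < pi\<close> by (intro sin_gt_zero) auto
    thus False using cs by simp
  qed
qed

lemma omega_not_neg:
  assumes "k < d div 2" "m < d div 2" and w_def: "w = cis (2 * pi / real d)"
  shows "w ^ m \<noteq> - (w ^ k)"
proof
  assume e: "w ^ m = - (w ^ k)"
  have nz: "w ^ i \<noteq> 0" for i using w_def by simp
  show False
  proof (cases "k \<le> m")
    case True
    then obtain j where m: "m = k + j" using le_Suc_ex by blast
    have "w ^ k * w ^ j = w ^ k * (-1)" using e m by (simp add: power_add)
    hence wj: "w ^ j = -1" using nz[of k] by (metis mult_left_cancel)
    have "2 * j < d" using assms m by linarith
    thus False using cis_neg1_small[of j d] wj w_def by simp
  next
    case False
    then obtain j where m: "k = m + j" using le_Suc_ex[of m k] by auto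
    have "w ^ m * w ^ j = w ^ m * (-1)" using e m by (simp add: power_add) (metis minus_minus)
    hence wj: "w ^ j = -1" using nz[of m] by (metis mult_left_cancel)
    have "2 * j < d" using assms m by linarith
    thus False using cis_neg1_small[of j d] wj w_def by simp
  qed
qed

lemma omega_odd_not_neg:
  assumes "odd N" and w_def: "w = cis (2 * pi / real N)"
  shows "w ^ m \<noteq> - (w ^ k)"
proof
  have N0: "N > 0" using assms by (cases N) auto
  have w1: "w ^ N = 1" using N0 by (simp add: DeMoivre w_def)
  assume e: "w ^ m = - (w ^ k)"
  have "(w ^ m) ^ N = 1" by (metis power_mult mult.commute power_one w1)
  moreover have "(- (w ^ k)) ^ N = - ((w ^ k) ^ N)" using assms by (simp add: power_minus_odd)
  moreover have "(w ^ k) ^ N = 1" by (metis power_mult mult.commute power_one w1)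
  ultimately show False using e by simp
qed

lemma er_split:
  assumes "cmod x = 1" "cnj x * y \<in> {1, -1}"
  shows "y = x \<or> y = - x"
proof -
  have xx: "x * cnj x = 1" using assms(1) by (metis complex_norm_square mult.commute of_real_1 power_one)
  have "y = x * (cnj x * y)" using xx by (simp add: mult.assoc[symmetric])
  thus ?thesis using assms(2) by (metis insertE mult.right_neutral mult_minus1_right singletonD)
qed

lemma unit_sq: "cmod x = 1 \<Longrightarrow> cnj x * x = 1"
  by (metis complex_norm_square mult.commute of_real_1 power_one)

theorem proposition4:
  fixes d :: nat and H :: "nat \<Rightarrow> nat \<Rightarrow> complex"
  assumes "complex_hadamard d H"
    and "dephased d H"
    and "((\<forall>i<d. H i i \<in> \<real>) \<and> (\<forall>i<d. \<forall>j<d. i \<noteq> j \<longrightarrow> H i j \<notin> \<real>))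
         \<or> (\<forall>i<d. \<forall>j<d. \<exists>k<d div 2. H i j = cis (2 * pi / real d) ^ k)
         \<or> (\<exists>N::nat. odd N \<and> (\<forall>i<d. \<forall>j<d. \<exists>k::nat. H i j = cis (2 * pi / real N) ^ k))"
  shows "\<not> (\<exists>a b. ER_column_pair d H a b) \<and> \<not> (\<exists>a b. ER_row_pair d H a b)"
proof -
  have um: "\<And>i j. i < d \<Longrightarrow> j < d \<Longrightarrow> cmod (H i j) = 1"
    using assms(1) unfolding complex_hadamard_def by auto
  show ?thesis
  proof (cases "(\<forall>i<d. H i i \<in> \<real>) \<and> (\<forall>i<d. \<forall>j<d. i \<noteq> j \<longrightarrow> H i j \<notin> \<real>)")
    case True
    have c: False if "ER_column_pair d H a b" for a b
    proof -
      have ab: "a < d" "b < d" "a \<noteq> b" and p: "cnj (H a a) * H a b \<in> {1, -1}"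
        using that unfolding ER_column_pair_def by auto
      have "H a b = H a a \<or> H a b = - H a a" using er_split[OF um[OF ab(1) ab(1)] p] .
      moreover have "H a a \<in> \<real>" "H a b \<notin> \<real>" using True ab by auto
      ultimately show False by auto
    qed
    have r: False if "ER_row_pair d H a b" for a b
    proof -
      have ab: "a < d" "b < d" "a \<noteq> b" and p: "cnj (H a a) * H b a \<in> {1, -1}"
        using that unfolding ER_row_pair_def by auto
      have "H b a = H a a \<or> H b a = - H a a" using er_split[OF um[OF ab(1) ab(1)] p] .
      moreover have "H a a \<in> \<real>" "H b a \<notin> \<real>" using True ab by auto
      ultimately show False by auto
    qed
    show ?thesis using c r by blast
  next
    case False
    have noneg: "H i j \<noteq> - H i' j'" if idx: "i < d" "j < d" "i' < d" "j' < d" for i j i' j'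
    proof -
      consider (A) "\<forall>i<d. \<forall>j<d. \<exists>k<d div 2. H i j = cis (2 * pi / real d) ^ k"
        | (B) "\<exists>N::nat. odd N \<and> (\<forall>i<d. \<forall>j<d. \<exists>k::nat. H i j = cis (2 * pi / real N) ^ k)"
        using assms(3) False by blast
      thus ?thesis
      proof cases
        case A
        then obtain k m where "k < d div 2" "H i j = cis (2 * pi / real d) ^ k"
          "m < d div 2" "H i' j' = cis (2 * pi / real d) ^ m" using idx by meson
        thus ?thesis using omega_not_neg[of m d k] by auto
      next
        case B
        then obtain N where N: "odd N" "\<forall>i<d. \<forall>j<d. \<exists>k::nat. H i j = cis (2 * pi / real N) ^ k" by blast
        then obtain k m where "H i j = cis (2 * pi / real N) ^ k"
          "H i' j' = cis (2 * pi / real N) ^ m" using idx by meson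
        thus ?thesis using omega_odd_not_neg[OF N(1), of _ k m] by auto
      qed
    qed
    have c: False if "ER_column_pair d H a b" for a b
    proof -
      have ab: "a < d" "b < d" "a \<noteq> b" and p: "\<forall>j<d. cnj (H j a) * H j b \<in> {1, -1}"
        using that unfolding ER_column_pair_def by auto
      have eq: "H j b = H j a" if "j < d" for j
        using er_split[OF um[OF that ab(1)]] p noneg that ab by (metis insertI1)
      have "(\<Sum>j<d. cnj (H j a) * H j b) = (\<Sum>j<d. 1)"
        by (rule sum.cong) (auto simp: eq unit_sq um ab)
      moreover have "(\<Sum>j<d. cnj (H j a) * H j b) = 0"
        using assms(1) ab unfolding complex_hadamard_def by auto
      ultimately show False using ab by simp
    qed
    have r: False if "ER_row_pair d H a b" for a b
    proof -
      have ab: "a < d" "b < d" "a \<noteq> b" and p: "\<forall>j<d. cnj (H a j) * H b j \<in> {1, -1}"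
        using that unfolding ER_row_pair_def by auto
      have eq: "H b j = H a j" if "j < d" for j
        using er_split[OF um[OF ab(1) that]] p noneg that ab by (metis insertI1)
      have "(\<Sum>k<d. H a k * cnj (H b k)) = (\<Sum>j<d. 1)"
        by (rule sum.cong) (simp_all add: eq, metis unit_sq um ab(1) mult.commute)
      moreover have "(\<Sum>k<d. H a k * cnj (H b k)) = 0"
        using rows_orth[OF assms(1) ab] .
      ultimately show False using ab by simp
    qed
    show ?thesis using c r by blast
  qed
qed

end
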